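(* Let $K$ be any field, let $u(x,y)\in K[x,y]\setminus K$ be biased, and let $\rho=(\alpha x+p(y),\beta y+\gamma)$ be a nonaffine triangular automorphism of $K[x,y]$, where $\alpha,\beta\in K\setminus\{0\}$, $\gamma\in K$ and $p(y)\in K[y]$ has degree at least $2$. Then $\deg(\rho u)>\deg u$.
   Context: An automorphism $\rho=(f,g)$ of $K[x,y]$ means $\rho x=f$, $\rho y=g$, and $\rho u=u(f,g)$; so $\rho u=u(\alpha x+p(y),\beta y+\gamma)$. $\deg$ denotes total degree. For $0\ne u\in K[x,y]$, $|u|$ denotes the homogeneous component of $u$ of maximal total degree, and $u$ is called biased if $\deg_x|u|\ge\deg_y|u|$, where $\deg_x,\deg_y$ are the degrees in $x$ and in $y$. *)

theory Defs
  imports "HOL-Computational_Algebra.Polynomial"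
begin

text \<open>Bivariate polynomials K[x,y] are represented as K[y][x], i.e. the type
  'a poly poly: the outer variable is x, the coefficients are polynomials in y.
  The monomial x^i y^j has coefficient coeff (coeff u i) j.\<close>

definition tdeg :: "'a::zero poly poly \<Rightarrow> nat" where
  "tdeg u = Max (insert 0 {i + degree (coeff u i) | i. i \<le> degree u \<and> coeff u i \<noteq> 0})"

definition hom_comp :: "'a::comm_semiring_1 poly poly \<Rightarrow> nat \<Rightarrow> 'a poly poly" where
  "hom_comp u d = (\<Sum>i\<le>d. monom (monom (coeff (coeff u i) (d - i)) (d - i)) i)"

definition top_comp :: "'a::comm_semiring_1 poly poly \<Rightarrow> 'a poly poly" where
  "top_comp u = hom_comp u (tdeg u)"

definition deg_x :: "'a::zero poly poly \<Rightarrow> nat" where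
  "deg_x v = degree v"

definition deg_y :: "'a::zero poly poly \<Rightarrow> nat" where
  "deg_y v = Max {degree (coeff v i) | i. i \<le> degree v}"

definition biased :: "'a::comm_semiring_1 poly poly \<Rightarrow> bool" where
  "biased u \<longleftrightarrow> u \<noteq> 0 \<and> deg_x (top_comp u) \<ge> deg_y (top_comp u)"

definition const2 :: "'a::zero \<Rightarrow> 'a poly poly" where
  "const2 c = [:[:c:]:]"

definition subst2 :: "'a::comm_ring_1 poly poly \<Rightarrow> 'a poly poly \<Rightarrow> 'a poly poly \<Rightarrow> 'a poly poly" where
  "subst2 u f g = (\<Sum>i\<le>degree u. (\<Sum>j\<le>degree (coeff u i). smult [:coeff (coeff u i) j:] (g ^ j)) * f ^ i)"

definition ypoly :: "'a::zero poly \<Rightarrow> 'a poly poly" where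
  "ypoly p = [:p:]"

definition X2 :: "'a::comm_semiring_1 poly poly" where
  "X2 = [:0, 1:]"

definition Y2 :: "'a::comm_semiring_1 poly poly" where
  "Y2 = [:[:0, 1:]:]"

end

theory Submission imports Defs begin

lemma tdeg_ge:
  assumes "coeff (coeff w s) t \<noteq> 0"
  shows "s + t \<le> tdeg w"
proof -
  have "coeff w s \<noteq> 0" using assms by auto
  hence s: "s \<le> degree w" using le_degree by blast
  have t: "t \<le> degree (coeff w s)" using assms le_degree by blast
  have fin: "finite {i + degree (coeff w i) | i. i \<le> degree w \<and> coeff w i \<noteq> 0}"
    by (rule finite_subset[of _ "(\<lambda>i. i + degree (coeff w i)) ` {..degree w}"]) auto
  have "s + degree (coeff w s) \<in> insert 0 {i + degree (coeff w i) | i. i \<le> degree w \<and> coeff w i \<noteq> 0}"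
    using s assms by auto
  hence "s + degree (coeff w s) \<le> tdeg w"
    unfolding tdeg_def using fin by (intro Max_ge) auto
  thus ?thesis using t by simp
qed

lemma coeff_order0:
  fixes p :: "'a::idom poly"
  assumes "p \<noteq> 0"
  shows "coeff p (order 0 p) \<noteq> 0"
proof -
  obtain q where q: "p = [:- 0, 1:] ^ order 0 p * q" "\<not> [:- 0, 1:] dvd q"
    using order_decomp[OF assms] by blast
  have "([:- 0, 1:] :: 'a poly) ^ order 0 p = monom 1 (order 0 p)"
    unfolding minus_zero by (simp add: monom_altdef)
  hence "coeff p (order 0 p) = coeff q 0"
    using q(1) by (metis coeff_monom_mult diff_self_eq_0 less_irrefl mult_1)
  moreover have "coeff q 0 \<noteq> 0"
    using q(2) dvd_iff_poly_eq_0[of 0 q] by (simp add: poly_0_coeff_0)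
  ultimately show ?thesis by simp
qed

lemma tdeg_attained:
  fixes u :: "'a::zero poly poly"
  assumes "u \<noteq> 0"
  shows "\<exists>i. coeff u i \<noteq> 0 \<and> i + degree (coeff u i) = tdeg u"
proof -
  let ?S = "{i + degree (coeff u i) | i. i \<le> degree u \<and> coeff u i \<noteq> 0}"
  have fin: "finite ?S"
    by (rule finite_subset[of _ "(\<lambda>i. i + degree (coeff u i)) ` {..degree u}"]) auto
  have ne: "?S \<noteq> {}" using assms by auto
  have "tdeg u = Max ?S"
    unfolding tdeg_def using fin ne by (simp add: Max_insert)
  also have "\<dots> \<in> ?S" using fin ne by (rule Max_in)
  finally show ?thesis by auto
qed

lemma tdeg_le:
  assumes "coeff u i \<noteq> 0"
  shows "i + degree (coeff u i) \<le> tdeg u"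
  using tdeg_ge[of u i "degree (coeff u i)"] assms by simp

lemma coeff_hom_comp:
  "coeff (hom_comp u d) k = (if k \<le> d then monom (coeff (coeff u k) (d - k)) (d - k) else 0)"
  unfolding hom_comp_def by (simp add: coeff_sum coeff_monom)

lemma biased_top:
  fixes u :: "'a::comm_semiring_1 poly poly"
  assumes "biased u"
  shows "\<exists>a. a \<le> tdeg u \<and> coeff (coeff u a) (tdeg u - a) \<noteq> 0 \<and> tdeg u \<le> 2 * a"
proof -
  define d where "d = tdeg u"
  have u0: "u \<noteq> 0" using assms unfolding biased_def by simp
  obtain i where i: "coeff u i \<noteq> 0" "i + degree (coeff u i) = d"
    using tdeg_attained[OF u0] d_def by blast
  define T where "T = top_comp u"
  have cT: "coeff T k = (if k \<le> d then monom (coeff (coeff u k) (d - k)) (d - k) else 0)" for k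
    unfolding T_def top_comp_def d_def by (rule coeff_hom_comp)
  have "coeff T i \<noteq> 0" using i cT by auto
  hence T0: "T \<noteq> 0" by auto
  define a where "a = degree T"
  have ca: "coeff T a \<noteq> 0" using T0 a_def by simp
  hence ad: "a \<le> d" using cT by (auto split: if_splits)
  have cua: "coeff (coeff u a) (d - a) \<noteq> 0" using ca cT ad by auto
  have "degree (coeff T a) = d - a" using cT ad cua by (simp add: degree_monom_eq)
  moreover have "degree (coeff T a) \<le> deg_y T"
    unfolding deg_y_def a_def by (intro Max_ge) auto
  moreover have "deg_y T \<le> a"
    using assms unfolding biased_def deg_x_def T_def a_def by simp
  ultimately have "d \<le> 2 * a" by linarith
  thus ?thesis using ad cua d_def by blast
qed

lemma coeff_binom_lin:
  fixes a b :: "'a::comm_semiring_1"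
  shows "coeff (([:a:] + monom b 1) ^ n) k = of_nat (n choose k) * b ^ k * a ^ (n - k)"
proof -
  have "([:a:] + monom b 1) ^ n = (\<Sum>j\<le>n. of_nat (n choose j) * monom b 1 ^ j * [:a:] ^ (n - j))"
    by (subst add.commute, rule binomial_ring)
  also have "\<dots> = (\<Sum>j\<le>n. monom (of_nat (n choose j) * b ^ j * a ^ (n - j)) j)"
    by (intro sum.cong refl) (simp add: monom_power poly_const_pow of_nat_poly smult_monom mult_ac)
  finally have "coeff (([:a:] + monom b 1) ^ n) k = (\<Sum>j\<le>n. coeff (monom (of_nat (n choose j) * b ^ j * a ^ (n - j)) j) k)"
    by (simp add: coeff_sum)
  also have "\<dots> = of_nat (n choose k) * b ^ k * a ^ (n - k)"
    by (simp add: coeff_monom binomial_eq_0 not_le)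
  finally show ?thesis .
qed

lemma const_sum: "(\<Sum>j\<in>A. [:f j:]) = [:\<Sum>j\<in>A. f j:]"
  by (induction A rule: infinite_finite_induct) auto

lemma inner_pcomp:
  fixes c q :: "'a::comm_ring_1 poly"
  shows "(\<Sum>j\<le>degree c. smult [:coeff c j:] ([:q:] ^ j)) = [:pcompose c q:]"
proof -
  have "(\<Sum>j\<le>degree c. smult [:coeff c j:] ([:q:] ^ j)) = (\<Sum>j\<le>degree c. [:[:coeff c j:] * q ^ j:])"
    by (intro sum.cong refl) (simp add: poly_const_pow)
  also have "\<dots> = [:\<Sum>j\<le>degree c. [:coeff c j:] * q ^ j:]" by (rule const_sum)
  also have "(\<Sum>j\<le>degree c. [:coeff c j:] * q ^ j) = pcompose c q"
    unfolding pcompose_altdef poly_altdef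
    by (simp add: degree_map_poly coeff_map_poly)
  finally show ?thesis .
qed

theorem proposition4p1:
  fixes u :: "'a::field poly poly" and \<alpha> \<beta> \<gamma> :: 'a and p :: "'a poly"
  assumes "u \<notin> range const2"
    and "biased u"
    and "\<alpha> \<noteq> 0" and "\<beta> \<noteq> 0"
    and "degree p \<ge> 2"
  shows "tdeg (subst2 u (smult [:\<alpha>:] X2 + ypoly p) (smult [:\<beta>:] Y2 + const2 \<gamma>)) > tdeg u"
proof -
  note a\<alpha> = assms(3) and a\<beta> = assms(4)
  define d where "d = tdeg u"
  define c where "c i = coeff u i" for i
  define e where "e i = degree (c i)" for i
  define m where "m = degree p"
  define l where "l = lead_coeff p"
  define q where "q = [:\<gamma>, \<beta>:]"
  define h where "h i = pcompose (c i) q" for i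
  define P where "P = [:p:] + monom [:\<alpha>:] 1"
  define R where "R = subst2 u (smult [:\<alpha>:] X2 + ypoly p) (smult [:\<beta>:] Y2 + const2 \<gamma>)"
  have m2: "m \<ge> 2" using assms(5) m_def by simp
  have p0: "p \<noteq> 0" using m2 m_def by auto
  have l0: "l \<noteq> 0" using p0 l_def by simp
  have u0: "u \<noteq> 0"
  proof
    assume "u = 0"
    hence "u = const2 0" by (simp add: const2_def)
    thus False using assms(1) by auto
  qed
  have dq: "degree q = 1" using a\<beta> q_def by simp
  have hdeg: "degree (h i) = e i" for i using dq by (simp add: h_def e_def degree_pcompose)
  have hlead: "lead_coeff (h i) = lead_coeff (c i) * \<beta> ^ e i" for i
    using dq lead_coeff_comp[of q "c i"] by (simp add: h_def e_def q_def)
  have h0: "h i = 0 \<longleftrightarrow> c i = 0" for i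
    using dq by (simp add: h_def pcompose_eq_0_iff)
  have PX: "smult [:\<alpha>:] X2 + ypoly p = P"
    unfolding P_def X2_def ypoly_def by (simp add: monom_altdef)
  have QX: "smult [:\<beta>:] Y2 + const2 \<gamma> = [:q:]"
    unfolding Y2_def const2_def q_def by simp
  have inner: "(\<Sum>j\<le>degree (c i). smult [:coeff (c i) j:] ([:q:] ^ j)) = [:h i:]" for i
    using inner_pcomp[of "c i" q] by (simp add: h_def)
  have R_eq: "R = (\<Sum>i\<le>degree u. [:h i:] * P ^ i)"
    unfolding R_def PX QX subst2_def using inner by (simp add: c_def)
  have coeffR: "coeff R s = (\<Sum>i\<le>degree u. h i * (of_nat (i choose s) * [:\<alpha>:] ^ s * p ^ (i - s)))" for s
    unfolding R_eq P_def by (simp add: coeff_sum coeff_binom_lin[unfolded One_nat_def])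
  define W where "W = {m * i + e i | i. i \<le> degree u \<and> c i \<noteq> 0}"
  define M where "M = Max W"
  have finW: "finite W"
    unfolding W_def by (rule finite_subset[of _ "(\<lambda>i. m * i + e i) ` {..degree u}"]) auto
  have Wge: "c i \<noteq> 0 \<Longrightarrow> m * i + e i \<le> M" for i
    unfolding M_def using finW W_def le_degree c_def by (intro Max_ge) auto
  define I where "I = {i. i \<le> degree u \<and> c i \<noteq> 0 \<and> m * i + e i = M}"
  have finI: "finite I" unfolding I_def by auto
  have neI: "I \<noteq> {}"
  proof -
    have "W \<noteq> {}" using u0 W_def c_def by auto
    hence "M \<in> W" using finW M_def by simp
    thus ?thesis unfolding W_def I_def by auto
  qed
  obtain a where a: "a \<le> d" "coeff (c a) (d - a) \<noteq> 0" "d \<le> 2 * a"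
    using biased_top[OF assms(2)] unfolding d_def c_def by blast
  have tdle: "c i \<noteq> 0 \<Longrightarrow> i + e i \<le> d" for i
    using tdeg_le[of u i] unfolding d_def e_def c_def by blast
  have a1: "a \<ge> 1"
  proof (rule ccontr)
    assume "\<not> a \<ge> 1"
    hence d0: "d = 0" using a(3) by simp
    have z: "i = 0 \<and> e i = 0" if "c i \<noteq> 0" for i using tdle[OF that] d0 by (metis add_is_0 le_zero_eq)
    have "u = const2 (coeff (c 0) 0)"
    proof (rule poly_eqI)
      fix n
      show "coeff u n = coeff (const2 (coeff (c 0) 0)) n"
      proof (cases "n = 0")
        case True
        show ?thesis
        proof (cases "c 0 = 0")
          case True
          thus ?thesis using \<open>n = 0\<close> by (simp add: c_def const2_def)
        next
          case False
          hence "degree (c 0) = 0" using z[OF False] unfolding e_def by blast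
          hence "[:coeff (c 0) 0:] = c 0" by (rule degree_0_id)
          thus ?thesis using \<open>n = 0\<close> by (simp add: c_def const2_def)
        qed
      next
        case False
        hence "c n = 0" using z by blast
        thus ?thesis using False by (simp add: c_def const2_def coeff_pCons split: nat.split)
      qed
    qed
    thus False using assms(1) by auto
  qed
  have ca0: "c a \<noteq> 0" using a(2) by auto
  have ea: "e a \<ge> d - a" using le_degree[OF a(2)] unfolding e_def by blast
  have MA: "M \<ge> m * a + (d - a)" using Wge[OF ca0] ea by simp
  have Iga: "a \<le> i" if iI: "i \<in> I" for i
  proof (rule ccontr)
    assume "\<not> a \<le> i"
    then obtain r where r: "a = i + r" "r > 0" by (metis less_imp_add_positive not_le)
    have ci: "c i \<noteq> 0" "m * i + e i = M" using iI I_def by auto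
    have "m * a = m * i + m * r" using r by (simp add: algebra_simps)
    moreover have "m * r \<ge> 2 * r" using m2 by simp
    moreover have "i + e i \<le> d" using tdle ci(1) by blast
    ultimately show False using MA a(1) r ci(2) by linarith
  qed
  define L where "L = [:l:] + monom \<alpha> 1"
  define k where "k i = lead_coeff (c i) * \<beta> ^ e i" for i
  define \<phi> where "\<phi> = (\<Sum>i\<in>I. smult (k i) (L ^ i))"
  define \<chi> where "\<chi> = (\<Sum>i\<in>I. smult (k i) (L ^ (i - a)))"
  have coeff\<phi>: "coeff \<phi> s = (\<Sum>i\<in>I. k i * (of_nat (i choose s) * \<alpha> ^ s * l ^ (i - s)))" for s
    unfolding \<phi>_def L_def by (simp add: coeff_sum coeff_binom_lin[unfolded One_nat_def])
  have trm: "coeff (h i * (of_nat (i choose s) * [:\<alpha>:] ^ s * p ^ (i - s))) (M - m * s)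
      = (if i \<in> I then k i * (of_nat (i choose s) * \<alpha> ^ s * l ^ (i - s)) else 0)"
    if iu: "i \<le> degree u" and ms: "m * s \<le> M" for i s
  proof -
    have eq: "h i * (of_nat (i choose s) * [:\<alpha>:] ^ s * p ^ (i - s))
        = smult (of_nat (i choose s) * \<alpha> ^ s) (h i * p ^ (i - s))"
      by (simp add: of_nat_poly poly_const_pow mult_ac)
    show ?thesis
    proof (cases "c i = 0")
      case True
      hence "h i = 0" using h0 by simp
      then show ?thesis using True I_def eq by simp
    next
      case cne: False
      show ?thesis
      proof (cases "s \<le> i")
        case False
        then have "i < s" by simp
        then show ?thesis unfolding eq by (simp add: binomial_eq_0)
      next
        case True
        have hne: "h i \<noteq> 0" using h0 cne by simp
        have pne: "p ^ (i - s) \<noteq> 0" using p0 by simp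
        have dg: "degree (h i * p ^ (i - s)) = e i + m * (i - s)"
          using degree_mult_eq[OF hne pne] hdeg degree_power_eq[OF p0] m_def by simp
        have le: "m * i + e i \<le> M" using Wge cne by blast
        have msi: "m * s \<le> m * i" using True by simp
        have "m * (i - s) = m * i - m * s" by (simp add: diff_mult_distrib2)
        hence ds: "e i + m * (i - s) = (m * i + e i) - m * s" using msi by linarith
        show ?thesis
        proof (cases "i \<in> I")
          case True
          hence "m * i + e i = M" using I_def by simp
          hence "degree (h i * p ^ (i - s)) = M - m * s" using dg ds by simp
          hence "coeff (h i * p ^ (i - s)) (M - m * s) = lead_coeff (h i * p ^ (i - s))" by simp
          also have "\<dots> = lead_coeff (h i) * l ^ (i - s)" by (simp add: lead_coeff_mult lead_coeff_power l_def)
          finally have "coeff (h i * p ^ (i - s)) (M - m * s) = lead_coeff (h i) * l ^ (i - s)" .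
          then show ?thesis using eq True hlead k_def by (simp add: mult_ac)
        next
          case False
          hence "m * i + e i < M" using le iu cne I_def by auto
          hence "degree (h i * p ^ (i - s)) < M - m * s" using dg ds msi by linarith
          hence "coeff (h i * p ^ (i - s)) (M - m * s) = 0" by (rule coeff_eq_0)
          then show ?thesis using eq False by simp
        qed
      qed
    qed
  qed
  have key: "coeff (coeff R s) (M - m * s) = coeff \<phi> s" if ms: "m * s \<le> M" for s
  proof -
    have "coeff (coeff R s) (M - m * s)
        = (\<Sum>i\<le>degree u. coeff (h i * (of_nat (i choose s) * [:\<alpha>:] ^ s * p ^ (i - s))) (M - m * s))"
      by (simp add: coeffR coeff_sum)
    also have "\<dots> = (\<Sum>i\<le>degree u. if i \<in> I then k i * (of_nat (i choose s) * \<alpha> ^ s * l ^ (i - s)) else 0)"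
      by (intro sum.cong refl) (simp add: trm ms)
    also have "\<dots> = (\<Sum>i\<in>{..degree u} \<inter> I. k i * (of_nat (i choose s) * \<alpha> ^ s * l ^ (i - s)))"
      by (simp add: sum.inter_restrict)
    also have "{..degree u} \<inter> I = I" unfolding I_def by auto
    finally show ?thesis using coeff\<phi> by simp
  qed
  define i0 where "i0 = Max I"
  have i0I: "i0 \<in> I" using finI neI i0_def by simp
  have Ile: "i \<in> I \<Longrightarrow> i \<le> i0" for i using finI i0_def by simp
  have ci0: "coeff \<phi> i0 \<noteq> 0"
  proof -
    have "coeff \<phi> i0 = (\<Sum>i\<in>I. if i = i0 then k i0 * \<alpha> ^ i0 else 0)"
      unfolding coeff\<phi>
    proof (intro sum.cong refl)
      fix i assume iI: "i \<in> I"
      show "k i * (of_nat (i choose i0) * \<alpha> ^ i0 * l ^ (i - i0)) = (if i = i0 then k i0 * \<alpha> ^ i0 else 0)"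
      proof (cases "i = i0")
        case False
        hence "i < i0" using Ile[OF iI] by simp
        thus ?thesis by (simp add: binomial_eq_0)
      qed simp
    qed
    also have "\<dots> = k i0 * \<alpha> ^ i0" using finI i0I by simp
    also have "\<dots> \<noteq> 0"
      using i0I a\<alpha> a\<beta> unfolding k_def I_def by simp
    finally show ?thesis .
  qed
  have \<phi>0: "\<phi> \<noteq> 0" using ci0 by auto
  have deg\<phi>: "degree \<phi> = i0"
  proof (rule antisym)
    show "degree \<phi> \<le> i0"
    proof (rule degree_le, intro allI impI)
      fix n assume "i0 < n"
      hence "\<And>i. i \<in> I \<Longrightarrow> i < n" using Ile by fastforce
      thus "coeff \<phi> n = 0" unfolding coeff\<phi> by (intro sum.neutral) (simp add: binomial_eq_0)
    qed
    show "i0 \<le> degree \<phi>" using ci0 by (rule le_degree)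
  qed
  have \<phi>\<chi>: "\<phi> = L ^ a * \<chi>"
    unfolding \<phi>_def \<chi>_def sum_distrib_left
  proof (intro sum.cong refl)
    fix i assume "i \<in> I"
    hence "L ^ i = L ^ a * L ^ (i - a)" using Iga by (simp flip: power_add)
    thus "smult (k i) (L ^ i) = L ^ a * smult (k i) (L ^ (i - a))" by simp
  qed
  have \<chi>0: "\<chi> \<noteq> 0" using \<phi>0 \<phi>\<chi> by auto
  have dL: "degree L = 1" using a\<alpha> L_def by (simp add: monom_altdef)
  have deg\<chi>: "i0 = a + degree \<chi>"
  proof -
    have L0: "L \<noteq> 0" using dL by auto
    have "degree (L ^ a) = a" using degree_power_eq[OF L0, of a] dL by simp
    moreover have "L ^ a \<noteq> 0" using L0 by simp
    ultimately show ?thesis using deg\<phi> \<phi>\<chi> \<chi>0 degree_mult_eq[of "L ^ a" \<chi>] by simp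
  qed
  define s where "s = order 0 \<phi>"
  have sle: "s + a \<le> i0"
  proof -
    have "poly (L ^ a) 0 \<noteq> 0" using l0 L_def by (simp add: poly_monom)
    hence "order 0 (L ^ a) = 0" by (rule order_0I)
    hence "s = order 0 \<chi>" using order_mult[of "L ^ a" \<chi> 0] \<phi>0 \<phi>\<chi> s_def by simp
    thus ?thesis using order_degree[OF \<chi>0, of 0] deg\<chi> by simp
  qed
  have cs: "coeff \<phi> s \<noteq> 0" using coeff_order0[OF \<phi>0] s_def by simp
  have mi0: "m * i0 + e i0 = M" using i0I I_def by simp
  have msM: "m * s \<le> M" using sle mi0
  proof -
    have "m * s \<le> m * i0" using sle by simp
    thus ?thesis using mi0 by linarith
  qed
  define t where "t = M - m * s"
  have "coeff (coeff R s) t \<noteq> 0" using key[OF msM] cs t_def by simp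
  hence "s + t \<le> tdeg R" by (rule tdeg_ge)
  moreover have "d < s + t"
  proof (rule ccontr)
    assume "\<not> d < s + t"
    hence st: "s + t \<le> d" by simp
    define X where "X = (m - 1) * a"
    have F1: "m * s + t = M" using t_def msM by simp
    have F3: "m * s + m * t \<le> m * d" using mult_le_mono2[OF st, of m] by (simp add: algebra_simps)
    have tma: "t \<ge> m * a"
    proof -
      have "m * i0 \<ge> m * s + m * a" using sle mult_le_mono2[OF sle, of m] by (simp add: algebra_simps)
      thus ?thesis using mi0 t_def by linarith
    qed
    obtain n where n: "m = Suc n" using m2 by (cases m) auto
    have gen: "m * x = x + (m - 1) * x" for x by (simp add: n)
    have F4: "m * t = t + (m - 1) * t" by (rule gen)
    have F5: "(m - 1) * t \<ge> (m - 1) * (m * a)" using tma by simp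
    have F6: "(m - 1) * (m * a) \<ge> 2 * X" unfolding X_def using m2 by simp
    have F7: "m * a = X + a" unfolding X_def using m2
      using gen[of a] by simp
    have F8: "m * d = (m - 1) * d + d" using gen[of d] by simp
    have F9: "(m - 1) * d \<le> 2 * X" unfolding X_def using mult_le_mono2[OF a(3), of "m - 1"] by (simp add: algebra_simps)
    have F10: "X \<ge> 1" unfolding X_def using m2 a1 by simp
    show False using F1 F3 F4 F5 F6 F7 F8 F9 F10 MA a(1) by linarith
  qed
  ultimately show ?thesis using d_def R_def by simp
qed

end
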